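(* Let $v$ satisfy the standing assumptions and the doubling condition, and let $g(x)=v(1-x^{-1})$. Suppose that for every $q>1$ there exist $A(q)>1$ and $y_0$ such that for all $y>y_0$ and $x>qy$ one has $g(x)>A(q)\,g(y)$. Let $u(z)=\operatorname{Re}\sum_k a_{n_k}z^{n_k}$ be a Hadamard gap series ($n_k$ positive integers, $n_{k+1}\ge\lambda n_k$, $\lambda>1$). If there is $C$ with $|a_{n_k}|\le C g(n_k)$ for all $k$, then $u\in h^\infty_v$.
   Context: Standing assumptions: $v:[0,1)\to[1,\infty)$ is positive, increasing, continuous, $v(0)=1$, $\lim_{r\to1}v(r)=+\infty$. Doubling condition: there is $D\ge1$ with $v(1-d)\le D\,v(1-2d)$ for all $d\in(0,1/2]$. $h^\infty_v$ is the set of real harmonic $u$ on $\mathbb{D}$ with $|u(z)|\le Kv(|z|)$ for some $K>0$. *)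

theory Defs
  imports "HOL-Analysis.Analysis"
begin

text \<open>Real harmonic functions on an open set of the plane (identified with complex):
  C^2 functions whose Laplacian vanishes. ux, uy are the first partials,
  uxx, uxy, uyx, uyy the second partials.\<close>
definition harmonic_on :: "complex set \<Rightarrow> (complex \<Rightarrow> real) \<Rightarrow> bool" where
  "harmonic_on S u \<longleftrightarrow> open S \<and>
     (\<exists>ux uy uxx uxy uyx uyy.
        (\<forall>z\<in>S. (u has_derivative (\<lambda>h. Re h * ux z + Im h * uy z)) (at z)
              \<and> (ux has_derivative (\<lambda>h. Re h * uxx z + Im h * uxy z)) (at z)
              \<and> (uy has_derivative (\<lambda>h. Re h * uyx z + Im h * uyy z)) (at z)
              \<and> uxx z + uyy z = 0)
        \<and> continuous_on S uxx \<and> continuous_on S uxy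
        \<and> continuous_on S uyx \<and> continuous_on S uyy)"

definition weight :: "(real \<Rightarrow> real) \<Rightarrow> bool" where
  "weight v \<longleftrightarrow> (\<forall>r\<in>{0..<1}. v r \<ge> 1) \<and> mono_on {0..<1} v
     \<and> continuous_on {0..<1} v \<and> v 0 = 1 \<and> filterlim v at_top (at_left 1)"

definition doubling :: "(real \<Rightarrow> real) \<Rightarrow> bool" where
  "doubling v \<longleftrightarrow> (\<exists>D\<ge>1. \<forall>d\<in>{0<..1/2}. v (1 - d) \<le> D * v (1 - 2 * d))"

definition h_inf :: "(real \<Rightarrow> real) \<Rightarrow> (complex \<Rightarrow> real) set" where
  "h_inf v = {u. harmonic_on (ball 0 1) u \<and>
                 (\<exists>K>0. \<forall>z\<in>ball 0 1. \<bar>u z\<bar> \<le> K * v (norm z))}"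

end

theory Submission imports Defs begin


lemma weight_g_ge1:
  assumes "weight v" "x \<ge> 1" shows "v (1 - 1/x) \<ge> 1"
proof -
  have "1 - 1/x \<in> {0..<1}" using assms(2) by (auto simp: field_simps)
  thus ?thesis using assms(1) unfolding weight_def by auto
qed

lemma weight_g_mono:
  assumes "weight v" "1 \<le> x" "x \<le> y" shows "v (1 - 1/x) \<le> v (1 - 1/y)"
proof -
  have a: "1 - 1/x \<in> {0..<1}" "1 - 1/y \<in> {0..<1}" using assms(2,3) by (auto simp: field_simps)
  have "1 - 1/x \<le> 1 - 1/y" using assms(2,3) by (simp add: frac_le)
  moreover have "mono_on {0..<1} v" using assms(1) unfolding weight_def by auto
  ultimately show ?thesis using a by (meson mono_onD)
qed

lemma doubling_pow:
  assumes w: "weight v" and D1: "D \<ge> 1" and Dd: "\<forall>d\<in>{0<..1/2}. v (1 - d) \<le> D * v (1 - 2 * d)"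
    and t: "t \<ge> 1"
  shows "\<forall>x. 1 \<le> x \<longrightarrow> x \<le> 2^j * t \<longrightarrow> v (1 - 1/x) \<le> D^j * v (1 - 1/t)"
proof (induction j)
  case 0
  then show ?case using weight_g_mono[OF w] by auto
next
  case (Suc j)
  show ?case
  proof (intro allI impI)
    fix x :: real assume x1: "1 \<le> x" and xle: "x \<le> 2 ^ Suc j * t"
    have gt: "v (1 - 1/t) \<ge> 1" using weight_g_ge1[OF w t] .
    have DjD: "D^j \<le> D^Suc j" using D1 by (simp add: power_increasing)
    show "v (1 - 1/x) \<le> D ^ Suc j * v (1 - 1/t)"
    proof (cases "x < 2")
      case True
      have "v (1 - 1/x) \<le> v (1 - 1/2)" using weight_g_mono[OF w x1, of 2] True by simp
      also have "\<dots> \<le> D * v (1 - 2 * (1/2))" using Dd[rule_format, of "1/2"] by simp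
      also have "v (1 - 2 * (1/2)) = 1" using w unfolding weight_def by simp
      also have "D * 1 \<le> D ^ Suc j * v (1 - 1/t)"
      proof -
        have "D \<le> D ^ Suc j" using D1 by (metis power_increasing power_one_right Suc_le_mono zero_le le_numeral_extra(4) One_nat_def)
        also have "\<dots> \<le> D ^ Suc j * v (1 - 1/t)" using gt D1 by (simp add: mult_le_cancel_left1 less_le_not_le)
        finally show ?thesis by simp
      qed
      finally show ?thesis by simp
    next
      case False
      have "1/x \<in> {0<..1/2}" using False by (auto simp: field_simps)
      hence "v (1 - 1/x) \<le> D * v (1 - 2 * (1/x))" using Dd by blast
      also have "1 - 2 * (1/x) = 1 - 1/(x/2)" by simp
      also have "v (1 - 1/(x/2)) \<le> D^j * v (1 - 1/t)"
        using Suc.IH[rule_format, of "x/2"] False xle by (auto simp: field_simps)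
      finally show ?thesis using D1 by (simp add: mult.assoc)
    qed
  qed
qed



lemma exp_bound:
  fixes E :: real assumes E: "E \<ge> 1"
  shows "\<exists>M. \<forall>j::nat. E^j * exp(-(2^j)/2) \<le> M"
proof -
  obtain m0 where m0: "E < 2^m0" using real_arch_pow[of 2 E] by auto
  define m where "m = Suc m0"
  have "(2::real)^m0 > 0" by simp
  hence "E \<le> 2 * 2^m0" using m0 by linarith
  hence m: "E \<le> 2^m" "m > 0" unfolding m_def by auto
  show ?thesis
  proof (intro exI allI)
    fix j :: nat
    define y :: real where "y = 2^j/2"
    have y0: "y > 0" unfolding y_def by simp
    have "(1 + y / real m) ^ m \<le> exp y"
      by (rule exp_ge_one_plus_x_over_n_power_n) (use y0 m in auto)
    moreover have "(y / real m) ^ m \<le> (1 + y / real m) ^ m"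
      by (rule power_mono) (use y0 in auto)
    ultimately have ey: "(y / real m) ^ m \<le> exp y" by linarith
    have ypos: "(y / real m) ^ m > 0" using y0 m by simp
    have Ej: "E^j \<le> (2^m)^j" by (rule power_mono) (use m E in auto)
    also have "(2^m)^j = (2 * y)^m" unfolding y_def by (simp add: power_mult[symmetric] power_mult_distrib mult.commute)
    also have "(2*y)^m = (2*real m)^m * (y / real m)^m"
    proof -
      have "2*y = (2*real m)*(y/real m)" using m by simp
      thus ?thesis by (simp only: power_mult_distrib)
    qed
    finally have "E^j \<le> (2*real m)^m * (y / real m)^m" .
    also have "\<dots> \<le> (2*real m)^m * exp y" using ey by (intro mult_left_mono) auto
    finally have "E^j \<le> (2*real m)^m * exp y" .
    hence "E^j * exp(-y) \<le> (2*real m)^m * exp y * exp (-y)" by (intro mult_right_mono) auto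
    also have "\<dots> = (2*real m)^m" by (simp add: exp_minus field_simps)
    finally show "E^j * exp(-(2^j)/2) \<le> (2*real m)^m" unfolding y_def by simp
  qed
qed

lemma tail_term:
  assumes w: "weight v" and D1: "D \<ge> 1" and Dd: "\<forall>d\<in>{0<..1/2}. v (1 - d) \<le> D * v (1 - 2 * d)"
    and t: "t \<ge> 1" and Nt: "real N > t"
    and M: "\<forall>j::nat. (2*D)^j * exp(-(2^j)/2) \<le> M"
  shows "v (1 - 1/real N) * (1 - 1/t)^N \<le> M * (t / real N) * v (1 - 1/t)"
proof -
  have ex: "\<exists>j::nat. real N \<le> 2^j * t"
  proof -
    obtain j::nat where "real N / t < 2^j" using real_arch_pow[of 2 "real N / t"] by auto
    hence "real N \<le> 2^j * t" using t by (simp add: field_simps)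
    thus ?thesis by blast
  qed
  define j where "j = (LEAST j::nat. real N \<le> 2^j * t)"
  have j1: "real N \<le> 2^j * t" unfolding j_def using LeastI_ex[OF ex] .
  have "j \<noteq> 0"
  proof
    assume "j = 0" with j1 Nt show False by simp
  qed
  then obtain i where ji: "j = Suc i" by (cases j) auto
  have i1: "\<not> real N \<le> 2^i * t" using not_less_Least[of i "\<lambda>j. real N \<le> 2^j * t"] ji unfolding j_def by auto
  have N1: "real N \<ge> 1" using Nt t by linarith
  have gN: "v (1 - 1/real N) \<le> D^j * v (1 - 1/t)" using doubling_pow[OF w D1 Dd t, of j] N1 j1 by auto
  have gt: "v (1 - 1/t) \<ge> 1" using weight_g_ge1[OF w t] .
  have r1: "0 \<le> 1 - 1/t" using t by (simp add: field_simps)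
  have "(1 - 1/t)^N \<le> (exp (-1/t))^N"
    by (rule power_mono) (use r1 exp_ge_add_one_self[of "-1/t"] in auto)
  also have "\<dots> = exp (-(real N)/t)" by (simp add: exp_of_nat_mult[symmetric])
  also have "\<dots> \<le> exp (-(2^j)/2)" using i1 t ji by (simp add: field_simps)
  finally have rN: "(1 - 1/t)^N \<le> exp (-(2^j)/2)" .
  have "v (1 - 1/real N) * (1 - 1/t)^N \<le> (D^j * v (1 - 1/t)) * exp (-(2^j)/2)"
    by (rule mult_mono[OF gN rN]) (use r1 gN gt D1 in auto)
  also have "\<dots> = ((2*D)^j * exp(-(2^j)/2)) * (1/2^j) * v (1 - 1/t)"
    by (simp add: power_mult_distrib field_simps)
  also have "\<dots> \<le> M * (1/2^j) * v (1 - 1/t)"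
    using M gt by (intro mult_right_mono) auto
  also have "\<dots> \<le> M * (t / real N) * v (1 - 1/t)"
  proof -
    have "exp (-(1/2)) \<le> M" using M[rule_format, of 0] by simp
    moreover have "exp (-(1/2)::real) > 0" by simp
    ultimately have M0: "M \<ge> 0" by linarith
    have p: "(2::real)^j > 0" by simp
    have "1/2^j \<le> t / real N" using j1 N1 p by (simp add: divide_simps mult.commute)
    thus ?thesis using M0 gt by (intro mult_right_mono mult_left_mono) auto
  qed
  finally show ?thesis .
qed



lemma head_sum:
  fixes G :: "nat \<Rightarrow> real"
  assumes A: "A > 1" and Gpos: "\<forall>k. G k \<ge> 0" and step: "\<forall>k\<ge>k0. G (Suc k) > A * G k"
  shows "(\<Sum>k\<in>{k0..k0+m}. G k) \<le> A/(A-1) * G (k0+m)"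
proof (induction m)
  case 0
  have "1 \<le> A/(A-1)" using A by (simp add: field_simps)
  hence "1 * G k0 \<le> A/(A-1) * G k0" using Gpos by (intro mult_right_mono) auto
  thus ?case by simp
next
  case (Suc m)
  have "(\<Sum>k\<in>{k0..k0+Suc m}. G k) = (\<Sum>k\<in>{k0..k0+m}. G k) + G (Suc (k0+m))"
    by simp
  also have "\<dots> \<le> A/(A-1) * G (k0+m) + G (Suc (k0+m))" using Suc.IH by simp
  also have "A/(A-1) * G (k0+m) \<le> A/(A-1) * (G (Suc (k0+m)) / A)"
  proof -
    have "G (k0+m) \<le> G (Suc (k0+m)) / A" using step[rule_format, of "k0+m"] A by (simp add: field_simps)
    thus ?thesis using A by (intro mult_left_mono) auto
  qed
  also have "A/(A-1) * (G (Suc (k0+m)) / A) + G (Suc (k0+m)) = A/(A-1) * G (Suc (k0+m))"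
    using A by (simp add: field_simps)
  finally show ?case by simp
qed

lemma lacunary_pow:
  assumes "\<forall>k. real (n (Suc k)) \<ge> lam * real (n k)" "lam \<ge> 1" "\<forall>k. n k \<ge> 1"
  shows "real (n (K+i)) \<ge> lam^i * real (n K)"
proof (induction i)
  case 0 then show ?case by simp
next
  case (Suc i)
  have "lam^Suc i * real (n K) = lam * (lam^i * real (n K))" by simp
  also have "\<dots> \<le> lam * real (n (K+i))" using Suc.IH assms(2) by (intro mult_left_mono) auto
  also have "\<dots> \<le> real (n (K + Suc i))" using assms(1)[rule_format, of "K+i"] by simp
  finally show ?case .
qed



lemma main_bound:
  fixes n :: "nat \<Rightarrow> nat"
  assumes w: "weight v" and D1: "D \<ge> 1" and Dd: "\<forall>d\<in>{0<..1/2}. v (1 - d) \<le> D * v (1 - 2 * d)"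
    and M: "\<forall>j::nat. (2*D)^j * exp(-(2^j)/2) \<le> M"
    and lam: "lam > 1" and n1: "\<forall>k. n k \<ge> 1" and lac: "\<forall>k. real (n (Suc k)) \<ge> lam * real (n k)"
    and A: "A > 1" and step: "\<forall>k\<ge>k0. v (1 - 1/real (n (Suc k))) > A * v (1 - 1/real (n k))"
    and t: "t \<ge> 1"
  defines "S0 \<equiv> (\<Sum>k<k0. v (1 - 1/real (n k)))"
  shows "summable (\<lambda>k. v (1 - 1/real (n k)) * (1 - 1/t)^(n k)) \<and>
         (\<Sum>k. v (1 - 1/real (n k)) * (1 - 1/t)^(n k)) \<le> (S0 + A/(A-1) + M * (lam/(lam-1))) * v (1 - 1/t)"
proof -
  define G where "G k = v (1 - 1/real (n k))" for k
  define h where "h k = G k * (1 - 1/t)^(n k)" for k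
  have G1: "G k \<ge> 1" for k unfolding G_def using weight_g_ge1[OF w] n1 by auto
  have r0: "0 \<le> 1 - 1/t" "1 - 1/t \<le> 1" using t by (auto simp: field_simps)
  have h0: "0 \<le> h k" for k unfolding h_def using G1[of k] r0 by (simp)
  have hG: "h k \<le> G k" for k unfolding h_def using G1[of k] r0
    by (simp add: mult_left_le power_le_one)
  have gt: "v (1 - 1/t) \<ge> 1" using weight_g_ge1[OF w t] .
  have smono: "strict_mono n"
  proof (rule strict_monoI_Suc)
    fix k have "real (n k) < lam * real (n k)" using lam n1[rule_format, of k] by simp
    also have "\<dots> \<le> real (n (Suc k))" using lac by auto
    finally show "n k < n (Suc k)" by simp
  qed
  have exk: "\<exists>k. real (n k) > t"
  proof -
    obtain k::nat where "t \<le> real k" using real_arch_simple by blast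
    moreover have "Suc k \<le> n (Suc k)" using strict_mono_imp_increasing[OF smono] by blast
    ultimately have "real (n (Suc k)) > t" by linarith
    thus ?thesis by blast
  qed
  define Kt where "Kt = (LEAST k. real (n k) > t)"
  have Kt: "real (n Kt) > t" unfolding Kt_def using LeastI_ex[OF exk] .
  have below: "k < Kt \<Longrightarrow> real (n k) \<le> t" for k
    using not_less_Least[of k "\<lambda>k. real (n k) > t"] unfolding Kt_def by auto
  have tailb: "h (i + Kt) \<le> M * v (1 - 1/t) * (1/lam)^i" for i
  proof -
    have Ni: "real (n (Kt+i)) \<ge> lam^i * real (n Kt)" using lacunary_pow[OF lac _ n1] lam by auto
    have Nt: "real (n (Kt+i)) > t"
    proof -
      have "lam^i \<ge> 1" using lam by simp
      hence "lam^i * real (n Kt) \<ge> real (n Kt)" by (simp add: mult_le_cancel_right1)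
      thus ?thesis using Ni Kt by linarith
    qed
    have "h (i + Kt) \<le> M * (t / real (n (Kt+i))) * v (1 - 1/t)"
      using tail_term[OF w D1 Dd t Nt M] unfolding h_def G_def by (simp add: add.commute)
    also have "\<dots> \<le> M * (1/lam)^i * v (1 - 1/t)"
    proof -
      have "exp (-(1/2)) \<le> M" using M[rule_format, of 0] by simp
      moreover have "exp (-(1/2)::real) > 0" by simp
      ultimately have M0: "M \<ge> 0" by linarith
      have lp: "lam^i > 0" using lam by simp
      have "t / real (n (Kt+i)) \<le> t / (lam^i * real (n Kt))"
      proof (rule divide_left_mono)
        have p1: "real (n Kt) > 0" using Kt t by linarith
        have p2: "real (n (Kt+i)) > 0" using n1[rule_format, of "Kt+i"] by simp
        show "0 < real (n (Kt + i)) * (lam ^ i * real (n Kt))" using p1 p2 lp by simp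
      qed (use Ni t in auto)
      also have "\<dots> = (1/lam)^i * (t / real (n Kt))" by (simp add: power_one_over)
      also have "\<dots> \<le> (1/lam)^i * 1" using Kt t lam by (intro mult_left_mono) auto
      finally have "t / real (n (Kt+i)) \<le> (1/lam)^i" by simp
      thus ?thesis using M0 gt by (intro mult_right_mono mult_left_mono) auto
    qed
    finally show ?thesis by (simp add: mult_ac)
  qed
  have geo: "(\<lambda>i. (1/lam)^i) sums (lam/(lam-1))"
  proof -
    have "(\<lambda>i. (1/lam)^i) sums (1 / (1 - 1/lam))" by (rule geometric_sums) (use lam in auto)
    moreover have "1 / (1 - 1/lam) = lam/(lam-1)" using lam by (simp add: field_simps)
    ultimately show ?thesis by simp
  qed
  have geo2: "(\<lambda>i. M * v (1 - 1/t) * (1/lam)^i) sums (M * v (1 - 1/t) * (lam/(lam-1)))"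
    by (rule sums_mult[OF geo])
  have sumtail: "summable (\<lambda>i. h (i + Kt))"
    by (rule summable_comparison_test'[OF sums_summable[OF geo2], of 0]) (use h0 tailb in auto)
  have taille: "(\<Sum>i. h (i + Kt)) \<le> M * v (1 - 1/t) * (lam/(lam-1))"
    using suminf_le[OF tailb sumtail sums_summable[OF geo2]] sums_unique[OF geo2] by simp
  have sumh: "summable h" using sumtail by (simp add: summable_iff_shift)
  have split: "(\<Sum>k. h k) = (\<Sum>i. h (i + Kt)) + sum h {..<Kt}"
    by (rule suminf_split_initial_segment[OF sumh])
  have S0pos: "S0 \<ge> 0" unfolding S0_def using G1 G_def by (auto intro: sum_nonneg order_trans[OF zero_le_one])
  have head: "sum h {..<Kt} \<le> S0 + A/(A-1) * v (1 - 1/t)"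
  proof -
    have "sum h {..<Kt} \<le> sum G {..<Kt}" by (rule sum_mono) (rule hG)
    also have "\<dots> \<le> S0 + A/(A-1) * v (1 - 1/t)"
    proof (cases "Kt \<le> k0")
      case True
      have "sum G {..<Kt} \<le> sum G {..<k0}"
        by (rule sum_mono2) (use True G1 in \<open>auto intro: order_trans[OF zero_le_one]\<close>)
      moreover have "A/(A-1) * v (1 - 1/t) \<ge> 0" using A gt by simp
      ultimately show ?thesis unfolding S0_def G_def by simp
    next
      case False
      define m where "m = Kt - 1 - k0"
      have Km: "Kt = Suc (k0 + m)" using False unfolding m_def by simp
      have "{..<Kt} = {..<k0} \<union> {k0..k0+m}" using Km by auto
      hence "sum G {..<Kt} = sum G {..<k0} + sum G {k0..k0+m}"
        by (simp add: sum.union_disjoint ivl_disj_int)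
      also have "sum G {k0..k0+m} \<le> A/(A-1) * G (k0+m)"
        by (rule head_sum[OF A]) (use G1 step in \<open>auto simp: G_def intro: order_trans[OF zero_le_one]\<close>)
      also have "G (k0+m) \<le> v (1 - 1/t)"
        unfolding G_def using weight_g_mono[OF w, of "real (n (k0+m))" t] below[of "k0+m"] Km n1 by auto
      hence "A/(A-1) * G (k0+m) \<le> A/(A-1) * v (1 - 1/t)" using A by (intro mult_left_mono) auto
      finally show ?thesis unfolding S0_def G_def by simp
    qed
    finally show ?thesis .
  qed
  have "(\<Sum>k. h k) \<le> S0 + A/(A-1) * v (1 - 1/t) + M * v (1 - 1/t) * (lam/(lam-1))"
    using split head taille by linarith
  also have "\<dots> \<le> (S0 + A/(A-1) + M * (lam/(lam-1))) * v (1 - 1/t)"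
  proof -
    have "S0 \<le> S0 * v (1 - 1/t)" using S0pos gt by (simp add: mult_le_cancel_left1)
    thus ?thesis by (simp add: algebra_simps)
  qed
  finally show ?thesis using sumh unfolding h_def G_def by simp
qed



lemma Re_deriv_aux:
  assumes "(P has_field_derivative w) (at z)"
  shows "((\<lambda>x. Re (P x)) has_derivative (\<lambda>h. Re h * Re w + Im h * (- Im w))) (at z)"
proof -
  have "((\<lambda>x. Re (P x)) has_derivative (\<lambda>h. Re (w * h))) (at z)"
    using bounded_linear.has_derivative[OF bounded_linear_Re has_field_derivative_imp_has_derivative[OF assms]]
    by simp
  moreover have "(\<lambda>h. Re (w * h)) = (\<lambda>h. Re h * Re w + Im h * (- Im w))"
    by (auto simp: algebra_simps)
  ultimately show ?thesis by simp
qed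

lemma Im_deriv_aux:
  assumes "(P has_field_derivative w) (at z)"
  shows "((\<lambda>x. - Im (P x)) has_derivative (\<lambda>h. Re h * (- Im w) + Im h * (- Re w))) (at z)"
proof -
  have "((\<lambda>x. - Im (P x)) has_derivative (\<lambda>h. - Im (w * h))) (at z)"
    using bounded_linear.has_derivative[OF bounded_linear_Im has_field_derivative_imp_has_derivative[OF assms]]
    by (intro has_derivative_minus) simp
  moreover have "(\<lambda>h. - Im (w * h)) = (\<lambda>h. Re h * (- Im w) + Im h * (- Re w))"
    by (auto simp: algebra_simps)
  ultimately show ?thesis by simp
qed

lemma harmonic_Re_power_series:
  fixes c :: "nat \<Rightarrow> complex"
  assumes sm: "\<And>z. norm z < 1 \<Longrightarrow> summable (\<lambda>m. c m * z^m)"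
    and eq: "\<And>z. z \<in> ball 0 1 \<Longrightarrow> f z = Re (\<Sum>m. c m * z^m)"
  shows "harmonic_on (ball 0 1) f"
proof -
  define P where "P d z = (\<Sum>m. d m * z^m)" for d :: "nat \<Rightarrow> complex" and z
  have sm1: "\<And>z. norm z < 1 \<Longrightarrow> summable (\<lambda>m. diffs c m * z^m)"
    by (rule termdiff_converges[OF _ sm])
  have sm2: "\<And>z. norm z < 1 \<Longrightarrow> summable (\<lambda>m. diffs (diffs c) m * z^m)"
    by (rule termdiff_converges[OF _ sm1])
  have D0: "(P c has_field_derivative P (diffs c) z) (at z)" if "norm z < 1" for z
    unfolding P_def by (rule termdiffs_strong'[OF sm that])
  have D1: "(P (diffs c) has_field_derivative P (diffs (diffs c)) z) (at z)" if "norm z < 1" for z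
    unfolding P_def by (rule termdiffs_strong'[OF sm1 that])
  have D2: "(P (diffs (diffs c)) has_field_derivative P (diffs (diffs (diffs c))) z) (at z)" if "norm z < 1" for z
    unfolding P_def by (rule termdiffs_strong'[OF sm2 that])
  have cont: "continuous_on (ball 0 1) (P (diffs (diffs c)))"
    by (rule continuous_at_imp_continuous_on) (auto intro: DERIV_isCont[OF D2])
  define ux where "ux z = Re (P (diffs c) z)" for z
  define uy where "uy z = - Im (P (diffs c) z)" for z
  define uxx where "uxx z = Re (P (diffs (diffs c)) z)" for z
  define uxy where "uxy z = - Im (P (diffs (diffs c)) z)" for z
  define uyy where "uyy z = - Re (P (diffs (diffs c)) z)" for z
  have "\<forall>z\<in>ball 0 1. (f has_derivative (\<lambda>h. Re h * ux z + Im h * uy z)) (at z)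
              \<and> (ux has_derivative (\<lambda>h. Re h * uxx z + Im h * uxy z)) (at z)
              \<and> (uy has_derivative (\<lambda>h. Re h * uxy z + Im h * uyy z)) (at z)
              \<and> uxx z + uyy z = 0"
  proof
    fix z :: complex assume z: "z \<in> ball 0 1"
    hence nz: "norm z < 1" by simp
    have "((\<lambda>x. Re (P c x)) has_derivative (\<lambda>h. Re h * ux z + Im h * uy z)) (at z)"
      using Re_deriv_aux[OF D0[OF nz]] unfolding ux_def uy_def by simp
    hence d0: "(f has_derivative (\<lambda>h. Re h * ux z + Im h * uy z)) (at z)"
      by (rule has_derivative_transform_within_open[OF _ open_ball z]) (simp add: eq P_def)
    have d1: "(ux has_derivative (\<lambda>h. Re h * uxx z + Im h * uxy z)) (at z)"
      using Re_deriv_aux[OF D1[OF nz]] unfolding ux_def uxx_def uxy_def by simp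
    have d2: "(uy has_derivative (\<lambda>h. Re h * uxy z + Im h * uyy z)) (at z)"
      using Im_deriv_aux[OF D1[OF nz]] unfolding uy_def uxy_def uyy_def by simp
    show "(f has_derivative (\<lambda>h. Re h * ux z + Im h * uy z)) (at z)
              \<and> (ux has_derivative (\<lambda>h. Re h * uxx z + Im h * uxy z)) (at z)
              \<and> (uy has_derivative (\<lambda>h. Re h * uxy z + Im h * uyy z)) (at z)
              \<and> uxx z + uyy z = 0"
      using d0 d1 d2 unfolding uxx_def uyy_def by simp
  qed
  moreover have "continuous_on (ball 0 1) uxx" unfolding uxx_def
    by (intro continuous_intros cont)
  moreover have "continuous_on (ball 0 1) uxy" unfolding uxy_def
    by (intro continuous_intros cont)
  moreover have "continuous_on (ball 0 1) uyy" unfolding uyy_def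
    by (intro continuous_intros cont)
  ultimately show ?thesis unfolding harmonic_on_def by blast
qed



theorem corollary5:
  fixes v :: "real \<Rightarrow> real" and a :: "nat \<Rightarrow> complex" and n :: "nat \<Rightarrow> nat"
    and lam C :: real
  assumes "weight v" and "doubling v"
    and "\<forall>q>1. \<exists>A>1. \<exists>y0. \<forall>y>y0. \<forall>x>q*y. v (1 - 1/x) > A * v (1 - 1/y)"
    and "lam > 1" and "\<forall>k. n k \<ge> 1" and "\<forall>k. real (n (Suc k)) \<ge> lam * real (n k)"
    and "\<forall>k. norm (a k) \<le> C * v (1 - 1 / real (n k))"
  shows "(\<lambda>z. Re (\<Sum>k. a k * z ^ n k)) \<in> h_inf v"
proof -
  note w = assms(1) and lam = assms(4) and n1 = assms(5) and lac = assms(6) and ab = assms(7)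
  obtain D where D1: "D \<ge> 1" and Dd: "\<forall>d\<in>{0<..1/2}. v (1 - d) \<le> D * v (1 - 2 * d)"
    using assms(2) unfolding doubling_def by blast
  obtain M where M: "\<forall>j::nat. (2*D)^j * exp(-(2^j)/2) \<le> M"
    using exp_bound[of "2*D"] D1 by auto
  define q where "q = (1 + lam)/2"
  have q1: "q > 1" "q < lam" using lam unfolding q_def by auto
  obtain A y0 where A: "A > 1" and Ay: "\<forall>y>y0. \<forall>x>q*y. v (1 - 1/x) > A * v (1 - 1/y)"
    using assms(3) q1 by blast
  have smono: "strict_mono n"
  proof (rule strict_monoI_Suc)
    fix k have "real (n k) < lam * real (n k)" using lam n1[rule_format, of k] by simp
    also have "\<dots> \<le> real (n (Suc k))" using lac by auto
    finally show "n k < n (Suc k)" by simp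
  qed
  obtain k0 :: nat where k0: "y0 < real k0" using reals_Archimedean2 by blast
  have step: "\<forall>k\<ge>k0. v (1 - 1/real (n (Suc k))) > A * v (1 - 1/real (n k))"
  proof (intro allI impI)
    fix k assume kk: "k0 \<le> k"
    have "k \<le> n k" using strict_mono_imp_increasing[OF smono] by blast
    hence y: "real (n k) > y0" using kk k0 by linarith
    have "q * real (n k) < lam * real (n k)" using q1 n1[rule_format, of k] by simp
    also have "\<dots> \<le> real (n (Suc k))" using lac by auto
    finally show "v (1 - 1/real (n (Suc k))) > A * v (1 - 1/real (n k))" using Ay y by blast
  qed
  define Kc where "Kc = (\<Sum>k<k0. v (1 - 1/real (n k))) + A/(A-1) + M * (lam/(lam-1))"
  have MB: "summable (\<lambda>k. v (1 - 1/real (n k)) * (1 - 1/t)^(n k)) \<and>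
         (\<Sum>k. v (1 - 1/real (n k)) * (1 - 1/t)^(n k)) \<le> Kc * v (1 - 1/t)" if "t \<ge> 1" for t
    using main_bound[OF w D1 Dd M lam n1 lac A step that] unfolding Kc_def by simp
  have C0: "C \<ge> 0"
  proof -
    have "v (1 - 1/real (n 0)) \<ge> 1" using weight_g_ge1[OF w] n1 by auto
    moreover have "0 \<le> C * v (1 - 1/real (n 0))" using ab[rule_format, of 0] norm_ge_zero order_trans by blast
    ultimately show ?thesis by (simp add: zero_le_mult_iff)
  qed
  have est: "summable (\<lambda>k. norm (a k * z ^ n k)) \<and> norm (\<Sum>k. a k * z ^ n k) \<le> C * Kc * v (norm z)"
    if z: "norm z < 1" for z
  proof -
    define r where "r = norm z"
    define t where "t = 1 / (1 - r)"
    have r: "0 \<le> r" "r < 1" using z unfolding r_def by auto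
    have t1: "t \<ge> 1" using r unfolding t_def by (simp add: field_simps)
    have rt: "1 - 1/t = r" using r unfolding t_def by simp
    have sumh: "summable (\<lambda>k. v (1 - 1/real (n k)) * r^(n k))"
      and sb: "(\<Sum>k. v (1 - 1/real (n k)) * r^(n k)) \<le> Kc * v r" using MB[OF t1] rt by auto
    have tb: "norm (a k * z ^ n k) \<le> C * (v (1 - 1/real (n k)) * r^(n k))" for k
    proof -
      have "norm (a k * z ^ n k) = norm (a k) * r ^ n k" unfolding r_def by (simp add: norm_mult norm_power)
      also have "\<dots> \<le> C * v (1 - 1/real (n k)) * r^(n k)" using ab r by (intro mult_right_mono) auto
      finally show ?thesis by (simp add: mult.assoc)
    qed
    have sC: "summable (\<lambda>k. C * (v (1 - 1/real (n k)) * r^(n k)))" using summable_mult[OF sumh] .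
    have sn: "summable (\<lambda>k. norm (a k * z ^ n k))"
      by (rule summable_comparison_test'[OF sC, of 0]) (use tb in auto)
    have "norm (\<Sum>k. a k * z ^ n k) \<le> (\<Sum>k. norm (a k * z ^ n k))" by (rule summable_norm[OF sn])
    also have "\<dots> \<le> (\<Sum>k. C * (v (1 - 1/real (n k)) * r^(n k)))" by (rule suminf_le[OF tb sn sC])
    also have "\<dots> = C * (\<Sum>k. v (1 - 1/real (n k)) * r^(n k))" by (rule suminf_mult[OF sumh])
    also have "\<dots> \<le> C * (Kc * v r)" by (rule mult_left_mono[OF sb C0])
    finally show ?thesis using sn unfolding r_def by (simp add: mult.assoc)
  qed
  define c where "c m = (if m \<in> range n then a (inv n m) else 0)" for m
  have inj: "inj n" using strict_mono_imp_inj_on[OF smono] .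
  have csums: "(\<lambda>m. c m * z^m) sums (\<Sum>k. a k * z ^ n k)" if z: "norm z < 1" for z
  proof -
    have "summable (\<lambda>k. norm (a k * z ^ n k))" using est[OF z] by simp
    hence "summable (\<lambda>k. a k * z ^ n k)" by (rule summable_norm_cancel)
    hence s1: "(\<lambda>k. a k * z ^ n k) sums (\<Sum>k. a k * z ^ n k)" by (rule summable_sums)
    have "(\<lambda>k. c (n k) * z ^ n k) = (\<lambda>k. a k * z ^ n k)"
      unfolding c_def using inj by (auto simp: inv_f_f)
    with s1 have "(\<lambda>k. (\<lambda>m. c m * z^m) (n k)) sums (\<Sum>k. a k * z ^ n k)" by simp
    moreover have "\<And>m. m \<notin> range n \<Longrightarrow> c m * z^m = 0" unfolding c_def by simp
    ultimately show ?thesis using sums_mono_reindex[OF smono, of "\<lambda>m. c m * z^m"] by blast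
  qed
  have harm: "harmonic_on (ball 0 1) (\<lambda>z. Re (\<Sum>k. a k * z ^ n k))"
  proof (rule harmonic_Re_power_series)
    show "summable (\<lambda>m. c m * z^m)" if "norm z < 1" for z using csums[OF that] sums_summable by blast
    show "Re (\<Sum>k. a k * z ^ n k) = Re (\<Sum>m. c m * z^m)" if "z \<in> ball 0 1" for z
      using sums_unique[OF csums[of z]] that by simp
  qed
  have Kc0: "Kc \<ge> 0"
  proof -
    have "exp (-(1/2)) \<le> M" using M[rule_format, of 0] by simp
    moreover have "exp (-(1/2)::real) > 0" by simp
    ultimately have M0: "M \<ge> 0" by linarith
    have "(\<Sum>k<k0. v (1 - 1/real (n k))) \<ge> 0"
      using weight_g_ge1[OF w] n1 by (intro sum_nonneg) (auto intro: order_trans[OF zero_le_one])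
    moreover have "A/(A-1) \<ge> 0" using A by simp
    moreover have "M * (lam/(lam-1)) \<ge> 0" using M0 lam by simp
    ultimately show ?thesis unfolding Kc_def by linarith
  qed
  have bnd: "\<forall>z\<in>ball 0 1. \<bar>Re (\<Sum>k. a k * z ^ n k)\<bar> \<le> (C * Kc + 1) * v (norm z)"
  proof
    fix z :: complex assume "z \<in> ball 0 1"
    hence z: "norm z < 1" by simp
    have v1: "v (norm z) \<ge> 1" using w z unfolding weight_def by auto
    have "\<bar>Re (\<Sum>k. a k * z ^ n k)\<bar> \<le> norm (\<Sum>k. a k * z ^ n k)" by (rule abs_Re_le_cmod)
    also have "\<dots> \<le> C * Kc * v (norm z)" using est[OF z] by simp
    also have "\<dots> \<le> (C * Kc + 1) * v (norm z)" using v1 by (simp add: algebra_simps)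
    finally show "\<bar>Re (\<Sum>k. a k * z ^ n k)\<bar> \<le> (C * Kc + 1) * v (norm z)" .
  qed
  have "C * Kc + 1 > 0" using C0 Kc0 by (simp add: add_nonneg_pos)
  with harm bnd show ?thesis unfolding h_inf_def by blast
qed

end
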